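(* For every $\varepsilon>0$ and $M>0$ there exists $\delta>0$ such that the following holds. Let $u\in U$ and let $(u_n)_{n\ge1}$ be a sequence in $U$ such that $\{u\}\cup\{u_n:n\ge1\}$ is bounded, all first super-diagonal entries $u_{i,i+1}$ and $(u_n)_{i,i+1}$ have absolute value at most $M$, and $|(u_n)_{i,i+1}-u_{i,i+1}|\le\delta$ for all $n$ and $i$. Then for all $i,j$, $\limsup_{n\to\infty}\left|\theta_{1/n}(u_1u_2\cdots u_n)_{i,j}-\theta_{1/n}(u^n)_{i,j}\right|<\varepsilon$.
   Context: $U$ is the group of $d\times d$ upper triangular real matrices with diagonal entries $1$; for $t>0$, $(\theta_t(u))_{i,j}=t^{j-i}u_{i,j}$ for $j\ge i$. *)

theory Defs
  imports "Jordan_Normal_Form.Matrix" "HOL-Library.Extended_Real" "HOL-Library.Liminf_Limsup"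
begin

definition unitri :: "nat \<Rightarrow> real mat set" where
  "unitri d = {u \<in> carrier_mat d d. \<forall>i<d. \<forall>j<d.
      (j < i \<longrightarrow> u $$ (i, j) = 0) \<and> (i = j \<longrightarrow> u $$ (i, j) = 1)}"

definition theta :: "real \<Rightarrow> real mat \<Rightarrow> real mat" where
  "theta t u = mat (dim_row u) (dim_col u)
      (\<lambda>(i, j). if i \<le> j then t ^ (j - i) * u $$ (i, j) else u $$ (i, j))"

definition seq_prod :: "nat \<Rightarrow> (nat \<Rightarrow> real mat) \<Rightarrow> nat \<Rightarrow> real mat" where
  "seq_prod d us n = foldl (*) (1\<^sub>m d) (map us [1..<Suc n])"

definition bounded_mats :: "real mat set \<Rightarrow> bool" where
  "bounded_mats S \<longleftrightarrow> (\<exists>B. \<forall>A\<in>S. \<forall>i<dim_row A. \<forall>j<dim_col A. \<bar>A $$ (i, j)\<bar> \<le> B)"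

end

theory Submission imports Defs begin


lemma unitriD: assumes "A \<in> unitri d"
  shows "A \<in> carrier_mat d d" "\<And>i j. j < i \<Longrightarrow> i < d \<Longrightarrow> A $$ (i,j) = 0"
    "\<And>i. i < d \<Longrightarrow> A $$ (i,i) = 1"
  using assms unfolding unitri_def by auto

lemma mult_entry:
  assumes A: "A \<in> unitri d" and V: "V \<in> unitri d" and ij: "i \<le> j" "j < d"
  shows "(A * V) $$ (i,j) = A $$ (i,j) + (\<Sum>k\<in>{i..<j}. A $$ (i,k) * V $$ (k,j))"
proof -
  have cA: "A \<in> carrier_mat d d" and cV: "V \<in> carrier_mat d d" using unitriD A V by auto
  have "(A * V) $$ (i,j) = (\<Sum>k\<in>{0..<d}. A $$ (i,k) * V $$ (k,j))"
    using cA cV ij by (simp add: scalar_prod_def)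
  also have "\<dots> = (\<Sum>k\<in>{i..j}. A $$ (i,k) * V $$ (k,j))"
  proof (rule sum.mono_neutral_right)
    show "\<forall>k\<in>{0..<d} - {i..j}. A $$ (i,k) * V $$ (k,j) = 0"
    proof
      fix k assume "k \<in> {0..<d} - {i..j}"
      then have "k < i \<or> j < k" "k < d" by auto
      then show "A $$ (i,k) * V $$ (k,j) = 0"
        using unitriD(2)[OF A, of k i] unitriD(2)[OF V, of j k] ij by auto
    qed
  qed (use ij in auto)
  also have "\<dots> = (\<Sum>k\<in>{i..<j}. A $$ (i,k) * V $$ (k,j)) + A $$ (i,j) * V $$ (j,j)"
    using ij by (simp add: atLeastLessThanSuc_atLeastAtMost[symmetric])
  finally show ?thesis using unitriD(3)[OF V] ij by simp
qed

lemma mult_unitri: assumes A: "A \<in> unitri d" and V: "V \<in> unitri d"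
  shows "A * V \<in> unitri d"
proof -
  have cA: "A \<in> carrier_mat d d" and cV: "V \<in> carrier_mat d d" using unitriD A V by auto
  have low: "(A * V) $$ (i,j) = 0" if "j < i" "i < d" for i j
  proof -
    have "(A * V) $$ (i,j) = (\<Sum>k\<in>{0..<d}. A $$ (i,k) * V $$ (k,j))"
      using cA cV that by (simp add: scalar_prod_def)
    also have "\<dots> = 0"
    proof (rule sum.neutral, rule ballI)
      fix k assume "k \<in> {0..<d}"
      then show "A $$ (i,k) * V $$ (k,j) = 0"
        using unitriD(2)[OF A, of k i] unitriD(2)[OF V, of j k] that by (cases "k < i") auto
    qed
    finally show ?thesis .
  qed
  have diag: "(A * V) $$ (i,i) = 1" if "i < d" for i
    using mult_entry[OF A V, of i i] that unitriD(3)[OF A] by simp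
  show ?thesis unfolding unitri_def using cA cV low diag by auto
qed

lemma one_unitri: "1\<^sub>m d \<in> unitri d" unfolding unitri_def by auto

lemma seq_prod_Suc: "seq_prod d us (Suc n) = seq_prod d us n * us (Suc n)"
  unfolding seq_prod_def by simp

lemma seq_prod_0: "seq_prod d us 0 = 1\<^sub>m d"
  unfolding seq_prod_def by simp

lemma seq_prod_unitri: assumes "\<forall>n\<ge>1. us n \<in> unitri d" shows "seq_prod d us n \<in> unitri d"
  by (induction n) (use assms in \<open>auto simp: seq_prod_0 seq_prod_Suc one_unitri intro: mult_unitri\<close>)

lemma pow_unitri: assumes "u \<in> unitri d" shows "u ^\<^sub>m n \<in> unitri d \<and> u ^\<^sub>m n = seq_prod d (\<lambda>_. u) n"
proof (induction n)
  case 0 then show ?case using unitriD(1)[OF assms] by (auto simp: seq_prod_0 one_unitri)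
next
  case (Suc n) then show ?case using assms by (auto simp: seq_prod_Suc intro: mult_unitri)
qed




lemma sumlemma:
  fixes x :: "nat \<Rightarrow> real"
  assumes x0: "x 0 = 0" and inc: "\<And>n. \<bar>x (Suc n) - x n\<bar> \<le> a * real n ^ m + b * (real n + 1) ^ (m - 1)"
    and a: "a \<ge> 0" and b: "b \<ge> 0" and mb: "m \<ge> 1 \<or> b = 0"
  shows "\<bar>x n\<bar> \<le> a * real n ^ Suc m + b * real n ^ m"
proof (induction n)
  case 0 then show ?case using x0 a b by (cases m) auto
next
  case (Suc n)
  have "\<bar>x (Suc n)\<bar> \<le> \<bar>x n\<bar> + \<bar>x (Suc n) - x n\<bar>" by linarith
  also have "\<dots> \<le> (a * real n ^ Suc m + b * real n ^ m) + (a * real n ^ m + b * (real n + 1) ^ (m - 1))"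
    using Suc inc[of n] by linarith
  also have "\<dots> = a * (real n ^ m * (real n + 1)) + b * (real n ^ m + (real n + 1) ^ (m - 1))"
    by (simp add: algebra_simps)
  also have "\<dots> \<le> a * (real n + 1) ^ Suc m + b * (real n + 1) ^ m"
  proof (rule add_mono)
    have "real n ^ m \<le> (real n + 1) ^ m" by (rule power_mono) auto
    then have "real n ^ m * (real n + 1) \<le> (real n + 1) ^ m * (real n + 1)"
      by (rule mult_right_mono) auto
    then show "a * (real n ^ m * (real n + 1)) \<le> a * (real n + 1) ^ Suc m"
      using a by (simp add: mult_left_mono mult.commute)
  next
    show "b * (real n ^ m + (real n + 1) ^ (m - 1)) \<le> b * (real n + 1) ^ m"
    proof (cases "b = 0")
      case False
      then have m: "m \<ge> 1" using mb by auto
      then obtain k where k: "m = Suc k" by (cases m) auto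
      have "real n ^ k \<le> (real n + 1) ^ k" by (rule power_mono) auto
      then have "real n * real n ^ k \<le> real n * (real n + 1) ^ k"
        by (rule mult_left_mono) auto
      then have "real n ^ m + (real n + 1) ^ (m - 1) \<le> (real n + 1) ^ m"
        using k by (simp add: algebra_simps)
      then show ?thesis using b by (rule mult_left_mono)
    qed simp
  qed
  finally show ?case by (simp add: add.commute)
qed

lemma crude:
  fixes x :: "nat \<Rightarrow> nat \<Rightarrow> nat \<Rightarrow> real" and v :: "nat \<Rightarrow> nat \<Rightarrow> nat \<Rightarrow> real"
  assumes B: "B \<ge> 0"
    and vB: "\<And>n k j. k < d \<Longrightarrow> j < d \<Longrightarrow> \<bar>v (Suc n) k j\<bar> \<le> B"
    and x0: "\<And>i j. i < j \<Longrightarrow> j < d \<Longrightarrow> x 0 i j = 0"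
    and diag: "\<And>n i. i < d \<Longrightarrow> x n i i = 1"
    and rec: "\<And>n i j. i \<le> j \<Longrightarrow> j < d \<Longrightarrow>
        x (Suc n) i j = x n i j + (\<Sum>k\<in>{i..<j}. x n i k * v (Suc n) k j)"
  shows "i \<le> j \<Longrightarrow> j < d \<Longrightarrow> \<bar>x n i j\<bar> \<le> (B * d + 1) ^ (j - i) * (real n + 1) ^ (j - i)"
proof (induction n arbitrary: i j)
  case 0 then show ?case using x0 diag B by (cases "i = j") auto
next
  case (Suc n)
  define R where "R = B * d + 1"
  have R1: "R \<ge> 1" using B unfolding R_def by simp
  show ?case
  proof (cases "i = j")
    case True then show ?thesis using diag Suc by simp
  next
    case False
    define m where "m = j - i"
    have m1: "m \<ge> 1" using False Suc.prems unfolding m_def by simp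
    have md: "real m * B \<le> R"
    proof -
      have "real m \<le> real d" unfolding m_def using Suc.prems by simp
      then have "real m * B \<le> real d * B" using B by (rule mult_right_mono)
      then show ?thesis unfolding R_def by (simp add: mult.commute)
    qed
    have trm: "\<bar>x n i k * v (Suc n) k j\<bar> \<le> B * (R ^ (m - 1) * (real n + 1) ^ (m - 1))"
      if k: "k \<in> {i..<j}" for k
    proof -
      have "\<bar>x n i k\<bar> \<le> R ^ (k - i) * (real n + 1) ^ (k - i)"
        using Suc.IH[of i k] k Suc.prems unfolding R_def by auto
      also have "\<dots> \<le> R ^ (m - 1) * (real n + 1) ^ (m - 1)"
        using k R1 unfolding m_def
        by (intro mult_mono power_increasing) auto
      finally have "\<bar>x n i k\<bar> \<le> R ^ (m - 1) * (real n + 1) ^ (m - 1)" .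
      moreover have "\<bar>v (Suc n) k j\<bar> \<le> B" using vB k Suc.prems by auto
      ultimately have "\<bar>x n i k\<bar> * \<bar>v (Suc n) k j\<bar> \<le> (R ^ (m - 1) * (real n + 1) ^ (m - 1)) * B"
        by (intro mult_mono) auto
      then show ?thesis by (simp add: abs_mult mult.commute)
    qed
    have "\<bar>x (Suc n) i j\<bar> \<le> \<bar>x n i j\<bar> + \<bar>\<Sum>k\<in>{i..<j}. x n i k * v (Suc n) k j\<bar>"
      using rec[of i j n] Suc.prems by simp
    also have "\<dots> \<le> R ^ m * (real n + 1) ^ m + real m * (B * (R ^ (m - 1) * (real n + 1) ^ (m - 1)))"
    proof (rule add_mono)
      show "\<bar>x n i j\<bar> \<le> R ^ m * (real n + 1) ^ m" using Suc unfolding R_def m_def by auto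
      have "\<bar>\<Sum>k\<in>{i..<j}. x n i k * v (Suc n) k j\<bar> \<le> (\<Sum>k\<in>{i..<j}. \<bar>x n i k * v (Suc n) k j\<bar>)"
        by (rule sum_abs)
      also have "\<dots> \<le> real (card {i..<j}) * (B * (R ^ (m - 1) * (real n + 1) ^ (m - 1)))"
        by (rule sum_bounded_above) (rule trm)
      finally show "\<bar>\<Sum>k\<in>{i..<j}. x n i k * v (Suc n) k j\<bar> \<le> real m * (B * (R ^ (m - 1) * (real n + 1) ^ (m - 1)))"
        unfolding m_def by simp
    qed
    also have "\<dots> \<le> R ^ m * (real n + 1) ^ m + R * (R ^ (m - 1) * (real n + 1) ^ (m - 1))"
    proof -
      have "real m * B * (R ^ (m - 1) * (real n + 1) ^ (m - 1)) \<le> R * (R ^ (m - 1) * (real n + 1) ^ (m - 1))"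
        using md R1 by (intro mult_right_mono) auto
      then show ?thesis by (simp add: mult.assoc)
    qed
    also have "\<dots> = R ^ m * (real n + 1) ^ (m - 1) * (real n + 2)"
      using m1 by (cases m) (auto simp: algebra_simps)
    also have "\<dots> \<le> R ^ m * (real (Suc n) + 1) ^ m"
    proof -
      have "(real n + 1) ^ (m - 1) * (real n + 2) \<le> (real n + 2) ^ (m - 1) * (real n + 2)"
        by (intro mult_right_mono power_mono) auto
      also have "\<dots> = (real (Suc n) + 1) ^ m" using m1 by (cases m) (auto simp: algebra_simps)
      finally show ?thesis using R1 by (simp add: mult.assoc mult_left_mono)
    qed
    finally show ?thesis unfolding R_def m_def by simp
  qed
qed




lemma rest_bound:
  fixes x :: "nat \<Rightarrow> nat \<Rightarrow> nat \<Rightarrow> real" and f :: "nat \<Rightarrow> real"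
  assumes R1: "R \<ge> 1" and C: "C \<ge> 0"
    and xb: "\<And>k. k \<in> {i..<i+m} \<Longrightarrow> \<bar>f k\<bar> \<le> C * (R ^ (k - i) * (real n + 1) ^ (k - i))"
  shows "\<bar>\<Sum>k\<in>{i..<i+m}. f k\<bar> \<le> real m * (C * R ^ (m - 1)) * (real n + 1) ^ (m - 1)"
proof -
  have "\<bar>\<Sum>k\<in>{i..<i+m}. f k\<bar> \<le> (\<Sum>k\<in>{i..<i+m}. \<bar>f k\<bar>)" by (rule sum_abs)
  also have "\<dots> \<le> real (card {i..<i+m}) * (C * (R ^ (m - 1) * (real n + 1) ^ (m - 1)))"
  proof (rule sum_bounded_above)
    fix k assume k: "k \<in> {i..<i+m}"
    have "R ^ (k - i) * (real n + 1) ^ (k - i) \<le> R ^ (m - 1) * (real n + 1) ^ (m - 1)"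
      using k R1 by (intro mult_mono power_increasing) auto
    then have "C * (R ^ (k - i) * (real n + 1) ^ (k - i)) \<le> C * (R ^ (m - 1) * (real n + 1) ^ (m - 1))"
      using C by (rule mult_left_mono)
    then show "\<bar>f k\<bar> \<le> C * (R ^ (m - 1) * (real n + 1) ^ (m - 1))" using xb[OF k] by linarith
  qed
  finally show ?thesis by (simp add: mult.assoc)
qed

lemma refined:
  fixes y :: "nat \<Rightarrow> nat \<Rightarrow> nat \<Rightarrow> real" and w :: "nat \<Rightarrow> nat \<Rightarrow> nat \<Rightarrow> real"
  assumes B: "B \<ge> 0" and M: "M \<ge> 0"
    and wB: "\<And>n k j. k < d \<Longrightarrow> j < d \<Longrightarrow> \<bar>w (Suc n) k j\<bar> \<le> B"
    and wM: "\<And>n k. Suc k < d \<Longrightarrow> \<bar>w (Suc n) k (Suc k)\<bar> \<le> M"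
    and y0: "\<And>i j. i < j \<Longrightarrow> j < d \<Longrightarrow> y 0 i j = 0"
    and diag: "\<And>n i. i < d \<Longrightarrow> y n i i = 1"
    and rec: "\<And>n i j. i \<le> j \<Longrightarrow> j < d \<Longrightarrow>
        y (Suc n) i j = y n i j + (\<Sum>k\<in>{i..<j}. y n i k * w (Suc n) k j)"
  shows "\<exists>E\<ge>0. (m \<le> 1 \<longrightarrow> E = 0) \<and>
     (\<forall>n i. i + m < d \<longrightarrow> \<bar>y n i (i+m)\<bar> \<le> M ^ m * real n ^ m + E * real n ^ (m - 1))"
proof (induction m)
  case 0 then show ?case using diag by auto
next
  case (Suc m)
  then obtain E where E: "E \<ge> 0" "m \<le> 1 \<longrightarrow> E = 0"
    "\<And>n i. i + m < d \<Longrightarrow> \<bar>y n i (i+m)\<bar> \<le> M ^ m * real n ^ m + E * real n ^ (m - 1)" by blast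
  define R where "R = B * d + 1"
  have R1: "R \<ge> 1" using B unfolding R_def by simp
  have cr: "\<bar>y n i j\<bar> \<le> R ^ (j - i) * (real n + 1) ^ (j - i)" if "i \<le> j" "j < d" for n i j
    unfolding R_def by (rule crude[OF B wB y0 diag rec that])
  define b where "b = M * E + real m * (B * R ^ (m - 1))"
  have b0: "b \<ge> 0" unfolding b_def using B M E R1 by simp
  have mb: "m \<ge> 1 \<or> b = 0" using E unfolding b_def by (cases m) auto
  have main: "\<bar>y n i (i + Suc m)\<bar> \<le> M ^ Suc m * real n ^ Suc m + b * real n ^ m"
    if i: "i + Suc m < d" for n i
  proof (rule sumlemma[where x="\<lambda>n. y n i (i + Suc m)"])
    show "y 0 i (i + Suc m) = 0" using y0 i by simp
    fix n
    let ?j = "i + Suc m"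
    have "y (Suc n) i ?j - y n i ?j = (\<Sum>k\<in>{i..<i+m}. y n i k * w (Suc n) k ?j) + y n i (i+m) * w (Suc n) (i+m) ?j"
      using rec[of i ?j n] i by simp
    then have "\<bar>y (Suc n) i ?j - y n i ?j\<bar> \<le> \<bar>\<Sum>k\<in>{i..<i+m}. y n i k * w (Suc n) k ?j\<bar> + \<bar>y n i (i+m) * w (Suc n) (i+m) ?j\<bar>"
      by simp
    also have "\<dots> \<le> real m * (B * R ^ (m - 1)) * (real n + 1) ^ (m - 1) +
        (M ^ m * real n ^ m + E * real n ^ (m - 1)) * M"
    proof (rule add_mono)
      show "\<bar>\<Sum>k\<in>{i..<i+m}. y n i k * w (Suc n) k ?j\<bar> \<le> real m * (B * R ^ (m - 1)) * (real n + 1) ^ (m - 1)"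
      proof (rule rest_bound[OF R1 B])
        fix k assume k: "k \<in> {i..<i+m}"
        have "\<bar>y n i k\<bar> * \<bar>w (Suc n) k ?j\<bar> \<le> (R ^ (k - i) * (real n + 1) ^ (k - i)) * B"
          using cr[of i k n] wB[of k ?j n] k i by (intro mult_mono) auto
        then show "\<bar>y n i k * w (Suc n) k ?j\<bar> \<le> B * (R ^ (k - i) * (real n + 1) ^ (k - i))"
          by (simp add: abs_mult mult.commute)
      qed
      have "\<bar>y n i (i+m)\<bar> * \<bar>w (Suc n) (i+m) ?j\<bar> \<le> (M ^ m * real n ^ m + E * real n ^ (m - 1)) * M"
        using E(3)[of i n] wM[of "i+m" n] i E(1) M by (intro mult_mono) auto
      then show "\<bar>y n i (i+m) * w (Suc n) (i+m) ?j\<bar> \<le> (M ^ m * real n ^ m + E * real n ^ (m - 1)) * M"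
        by (simp add: abs_mult)
    qed
    also have "\<dots> \<le> M ^ Suc m * real n ^ m + b * (real n + 1) ^ (m - 1)"
    proof -
      have "M * E * real n ^ (m - 1) \<le> M * E * (real n + 1) ^ (m - 1)"
        using M E(1) by (intro mult_left_mono power_mono) auto
      then show ?thesis unfolding b_def by (simp add: algebra_simps)
    qed
    finally show "\<bar>y (Suc n) i ?j - y n i ?j\<bar> \<le> M ^ Suc m * real n ^ m + b * (real n + 1) ^ (m - 1)" .
  qed (use M b0 mb in auto)
  show ?case using main b0 mb by (intro exI[of _ b]) auto
qed




lemma mpow: "real m * M ^ (m - 1) * M = real m * (M::real) ^ m"
  by (cases m) (auto simp: algebra_simps)

lemma diffbound:
  fixes x y v w :: "nat \<Rightarrow> nat \<Rightarrow> nat \<Rightarrow> real"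
  assumes B: "B \<ge> 0" and M: "M \<ge> 0" and dl: "\<delta> \<ge> 0"
    and vB: "\<And>n k j. k < d \<Longrightarrow> j < d \<Longrightarrow> \<bar>v (Suc n) k j\<bar> \<le> B"
    and wB: "\<And>n k j. k < d \<Longrightarrow> j < d \<Longrightarrow> \<bar>w (Suc n) k j\<bar> \<le> B"
    and vM: "\<And>n k. Suc k < d \<Longrightarrow> \<bar>v (Suc n) k (Suc k)\<bar> \<le> M"
    and wM: "\<And>n k. Suc k < d \<Longrightarrow> \<bar>w (Suc n) k (Suc k)\<bar> \<le> M"
    and vw: "\<And>n k. Suc k < d \<Longrightarrow> \<bar>v (Suc n) k (Suc k) - w (Suc n) k (Suc k)\<bar> \<le> \<delta>"
    and x0: "\<And>i j. i < j \<Longrightarrow> j < d \<Longrightarrow> x 0 i j = 0"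
    and xdiag: "\<And>n i. i < d \<Longrightarrow> x n i i = 1"
    and xrec: "\<And>n i j. i \<le> j \<Longrightarrow> j < d \<Longrightarrow>
        x (Suc n) i j = x n i j + (\<Sum>k\<in>{i..<j}. x n i k * v (Suc n) k j)"
    and y0: "\<And>i j. i < j \<Longrightarrow> j < d \<Longrightarrow> y 0 i j = 0"
    and ydiag: "\<And>n i. i < d \<Longrightarrow> y n i i = 1"
    and yrec: "\<And>n i j. i \<le> j \<Longrightarrow> j < d \<Longrightarrow>
        y (Suc n) i j = y n i j + (\<Sum>k\<in>{i..<j}. y n i k * w (Suc n) k j)"
  shows "\<exists>F\<ge>0. (m \<le> 1 \<longrightarrow> F = 0) \<and>
     (\<forall>n i. i + m < d \<longrightarrow> \<bar>x n i (i+m) - y n i (i+m)\<bar> \<le> real m * \<delta> * M ^ (m - 1) * real n ^ m + F * real n ^ (m - 1))"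
proof (induction m)
  case 0 then show ?case using xdiag ydiag by auto
next
  case (Suc m)
  then obtain F where F: "F \<ge> 0" "m \<le> 1 \<longrightarrow> F = 0"
    "\<And>n i. i + m < d \<Longrightarrow> \<bar>x n i (i+m) - y n i (i+m)\<bar> \<le> real m * \<delta> * M ^ (m - 1) * real n ^ m + F * real n ^ (m - 1)" by blast
  have "\<exists>E\<ge>0. (m \<le> 1 \<longrightarrow> E = 0) \<and>
     (\<forall>n i. i + m < d \<longrightarrow> \<bar>y n i (i+m)\<bar> \<le> M ^ m * real n ^ m + E * real n ^ (m - 1))"
    by (rule refined[OF B M wB wM y0 ydiag yrec])
  then obtain E where EE: "E \<ge> 0 \<and> (m \<le> 1 \<longrightarrow> E = 0) \<and>
     (\<forall>n i. i + m < d \<longrightarrow> \<bar>y n i (i+m)\<bar> \<le> M ^ m * real n ^ m + E * real n ^ (m - 1))"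
    by (elim exE) (rule that)
  have E: "E \<ge> 0" "m \<le> 1 \<longrightarrow> E = 0"
    "\<And>n i. i + m < d \<Longrightarrow> \<bar>y n i (i+m)\<bar> \<le> M ^ m * real n ^ m + E * real n ^ (m - 1)"
    using EE by auto
  define R where "R = B * d + 1"
  have R1: "R \<ge> 1" using B unfolding R_def by simp
  have crx: "\<bar>x n i j\<bar> \<le> R ^ (j - i) * (real n + 1) ^ (j - i)" if "i \<le> j" "j < d" for n i j
    unfolding R_def by (rule crude[OF B vB x0 xdiag xrec that])
  have cry: "\<bar>y n i j\<bar> \<le> R ^ (j - i) * (real n + 1) ^ (j - i)" if "i \<le> j" "j < d" for n i j
    unfolding R_def by (rule crude[OF B wB y0 ydiag yrec that])
  define b where "b = M * F + \<delta> * E + real m * ((2 * B) * R ^ (m - 1))"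
  define a where "a = real (Suc m) * \<delta> * M ^ m"
  have b0: "b \<ge> 0" unfolding b_def using B M E(1) F(1) R1 dl by simp
  have a0: "a \<ge> 0" unfolding a_def using M dl by simp
  have mb: "m \<ge> 1 \<or> b = 0" using E(2) F(2) unfolding b_def by (cases m) auto
  have main: "\<bar>x n i (i + Suc m) - y n i (i + Suc m)\<bar> \<le> a * real n ^ Suc m + b * real n ^ m"
    if i: "i + Suc m < d" for n i
  proof (rule sumlemma[where x="\<lambda>n. x n i (i + Suc m) - y n i (i + Suc m)"])
    show "x 0 i (i + Suc m) - y 0 i (i + Suc m) = 0" using x0[of i "i + Suc m"] y0[of i "i + Suc m"] i by simp
    fix n
    let ?j = "i + Suc m"
    let ?f = "\<lambda>k. x n i k * v (Suc n) k ?j - y n i k * w (Suc n) k ?j"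
    have "(x (Suc n) i ?j - y (Suc n) i ?j) - (x n i ?j - y n i ?j) = (\<Sum>k\<in>{i..<i+Suc m}. ?f k)"
      using xrec[of i ?j n] yrec[of i ?j n] i by (simp add: sum_subtractf)
    also have "\<dots> = (\<Sum>k\<in>{i..<i+m}. ?f k) + ?f (i+m)" by simp
    finally have "\<bar>(x (Suc n) i ?j - y (Suc n) i ?j) - (x n i ?j - y n i ?j)\<bar> \<le> \<bar>\<Sum>k\<in>{i..<i+m}. ?f k\<bar> + \<bar>?f (i+m)\<bar>"
      by (simp only: abs_triangle_ineq)
    also have "\<dots> \<le> real m * ((2 * B) * R ^ (m - 1)) * (real n + 1) ^ (m - 1) +
        ((real m * \<delta> * M ^ (m - 1) * real n ^ m + F * real n ^ (m - 1)) * M + (M ^ m * real n ^ m + E * real n ^ (m - 1)) * \<delta>)"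
    proof (rule add_mono)
      show "\<bar>\<Sum>k\<in>{i..<i+m}. ?f k\<bar> \<le> real m * ((2 * B) * R ^ (m - 1)) * (real n + 1) ^ (m - 1)"
      proof (rule rest_bound[OF R1])
        show "0 \<le> 2 * B" using B by simp
        fix k assume k: "k \<in> {i..<i+m}"
        have 1: "\<bar>x n i k\<bar> * \<bar>v (Suc n) k ?j\<bar> \<le> (R ^ (k - i) * (real n + 1) ^ (k - i)) * B"
          using crx[of i k n] vB[of k ?j n] k i by (intro mult_mono) auto
        have 2: "\<bar>y n i k\<bar> * \<bar>w (Suc n) k ?j\<bar> \<le> (R ^ (k - i) * (real n + 1) ^ (k - i)) * B"
          using cry[of i k n] wB[of k ?j n] k i by (intro mult_mono) auto
        have 3: "\<bar>?f k\<bar> \<le> \<bar>x n i k\<bar> * \<bar>v (Suc n) k ?j\<bar> + \<bar>y n i k\<bar> * \<bar>w (Suc n) k ?j\<bar>"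
          using abs_triangle_ineq4[of "x n i k * v (Suc n) k ?j" "y n i k * w (Suc n) k ?j"] by (simp only: abs_mult)
        show "\<bar>?f k\<bar> \<le> 2 * B * (R ^ (k - i) * (real n + 1) ^ (k - i))" using 1 2 3 by (simp add: algebra_simps)
      qed
      have eq: "?f (i+m) = (x n i (i+m) - y n i (i+m)) * v (Suc n) (i+m) ?j + y n i (i+m) * (v (Suc n) (i+m) ?j - w (Suc n) (i+m) ?j)"
        by (simp add: algebra_simps)
      have 1: "\<bar>x n i (i+m) - y n i (i+m)\<bar> * \<bar>v (Suc n) (i+m) ?j\<bar> \<le> (real m * \<delta> * M ^ (m - 1) * real n ^ m + F * real n ^ (m - 1)) * M"
        using F(3)[of i n] vM[of "i+m" n] i by (intro mult_mono) auto
      have 2: "\<bar>y n i (i+m)\<bar> * \<bar>v (Suc n) (i+m) ?j - w (Suc n) (i+m) ?j\<bar> \<le> (M ^ m * real n ^ m + E * real n ^ (m - 1)) * \<delta>"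
        using E(3)[of i n] vw[of "i+m" n] i E(1) M by (intro mult_mono) auto
      have 3: "\<bar>?f (i+m)\<bar> \<le> \<bar>x n i (i+m) - y n i (i+m)\<bar> * \<bar>v (Suc n) (i+m) ?j\<bar> + \<bar>y n i (i+m)\<bar> * \<bar>v (Suc n) (i+m) ?j - w (Suc n) (i+m) ?j\<bar>"
        unfolding eq using abs_triangle_ineq[of "(x n i (i+m) - y n i (i+m)) * v (Suc n) (i+m) ?j" "y n i (i+m) * (v (Suc n) (i+m) ?j - w (Suc n) (i+m) ?j)"]
        by (simp only: abs_mult)
      show "\<bar>?f (i+m)\<bar> \<le> (real m * \<delta> * M ^ (m - 1) * real n ^ m + F * real n ^ (m - 1)) * M + (M ^ m * real n ^ m + E * real n ^ (m - 1)) * \<delta>"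
        using 1 2 3 by linarith
    qed
    also have "\<dots> \<le> a * real n ^ m + b * (real n + 1) ^ (m - 1)"
    proof -
      have "(M * F + \<delta> * E) * real n ^ (m - 1) \<le> (M * F + \<delta> * E) * (real n + 1) ^ (m - 1)"
        using M F(1) E(1) dl by (intro mult_left_mono power_mono) auto
      moreover have "(real m * \<delta> * M ^ (m - 1) * real n ^ m + F * real n ^ (m - 1)) * M + (M ^ m * real n ^ m + E * real n ^ (m - 1)) * \<delta>
          = a * real n ^ m + (M * F + \<delta> * E) * real n ^ (m - 1)"
      proof -
        have "(real m * \<delta> * M ^ (m - 1) * real n ^ m) * M = \<delta> * real n ^ m * (real m * M ^ (m - 1) * M)"
          by (simp add: algebra_simps)
        also have "\<dots> = \<delta> * real n ^ m * (real m * M ^ m)" by (simp only: mpow)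
        finally show ?thesis unfolding a_def by (simp add: algebra_simps)
      qed
      ultimately show ?thesis unfolding b_def by (simp add: algebra_simps)
    qed
    finally show "\<bar>x (Suc n) i ?j - y (Suc n) i ?j - (x n i ?j - y n i ?j)\<bar> \<le> a * real n ^ m + b * (real n + 1) ^ (m - 1)" .
  qed (use a0 b0 mb in auto)
  show ?case using main b0 mb unfolding a_def by (intro exI[of _ b]) auto
qed




lemma limsup_final:
  fixes g :: "nat \<Rightarrow> real"
  assumes c: "c \<le> \<epsilon> / 2" and e: "\<epsilon> > 0" and F: "F \<ge> 0" "m \<le> 1 \<longrightarrow> F = 0"
    and gb: "\<And>n. n \<ge> 1 \<Longrightarrow> \<bar>g n\<bar> \<le> c * real n ^ m + F * real n ^ (m - 1)"
  shows "limsup (\<lambda>n. ereal \<bar>(1 / real n) ^ m * g n\<bar>) < ereal \<epsilon>"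
proof -
  define N where "N = nat \<lceil>4 * F / \<epsilon>\<rceil> + 1"
  have ev: "\<forall>n\<ge>N. ereal \<bar>(1 / real n) ^ m * g n\<bar> \<le> ereal (3 * \<epsilon> / 4)"
  proof (intro allI impI)
    fix n assume n: "n \<ge> N"
    have n1: "n \<ge> 1" using n unfolding N_def by simp
    have np: "real n > 0" using n1 by simp
    have "real N > 4 * F / \<epsilon>" unfolding N_def by linarith
    then have "real n > 4 * F / \<epsilon>" using n by linarith
    then have Fn: "F / real n \<le> \<epsilon> / 4" using e np F(1)
      by (simp add: field_simps)
    have "\<bar>(1 / real n) ^ m * g n\<bar> = (1 / real n) ^ m * \<bar>g n\<bar>" by (simp add: abs_mult)
    also have "\<dots> \<le> (1 / real n) ^ m * (c * real n ^ m + F * real n ^ (m - 1))"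
      using gb[OF n1] by (intro mult_left_mono) auto
    also have "\<dots> = c * ((1 / real n) ^ m * real n ^ m) + F * ((1 / real n) ^ m * real n ^ (m - 1))"
      by (simp add: algebra_simps)
    also have "(1 / real n) ^ m * real n ^ m = 1" using np by (simp add: power_mult_distrib[symmetric])
    also have "F * ((1 / real n) ^ m * real n ^ (m - 1)) \<le> F / real n"
    proof (cases "F = 0")
      case False
      then obtain k where k: "m = Suc k" using F(2) by (cases m) auto
      have "(1 / real n) ^ m * real n ^ (m - 1) = 1 / real n * ((1 / real n) ^ k * real n ^ k)"
        using k by simp
      also have "\<dots> = 1 / real n" using np by (simp add: power_mult_distrib[symmetric])
      finally show ?thesis by simp
    qed simp
    then have "c * 1 + F * ((1 / real n) ^ m * real n ^ (m - 1)) \<le> c + F / real n" by simp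
    finally have "\<bar>(1 / real n) ^ m * g n\<bar> \<le> c + F / real n" .
    then have "\<bar>(1 / real n) ^ m * g n\<bar> \<le> 3 * \<epsilon> / 4" using c Fn by linarith
    then show "ereal \<bar>(1 / real n) ^ m * g n\<bar> \<le> ereal (3 * \<epsilon> / 4)" by simp
  qed
  have "limsup (\<lambda>n. ereal \<bar>(1 / real n) ^ m * g n\<bar>) \<le> ereal (3 * \<epsilon> / 4)"
    by (rule Limsup_bounded) (use ev in \<open>auto simp: eventually_sequentially\<close>)
  also have "\<dots> < ereal \<epsilon>" using e by simp
  finally show ?thesis .
qed




lemma theta_entry: assumes "A \<in> carrier_mat d d" "i < d" "j < d"
  shows "theta t A $$ (i,j) = (if i \<le> j then t ^ (j - i) * A $$ (i,j) else A $$ (i,j))"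
  using assms unfolding theta_def by auto

lemma cbound:
  fixes M \<delta> :: real assumes M: "M > 0" and dl: "\<delta> \<ge> 0" and m: "m < d"
  shows "real m * \<delta> * M ^ (m - 1) \<le> \<delta> * ((real d + 1) * (M + 1) ^ d)"
proof -
  have "M ^ (m - 1) \<le> (M + 1) ^ (m - 1)" using M by (intro power_mono) auto
  also have "\<dots> \<le> (M + 1) ^ d" using M m by (intro power_increasing) auto
  finally have p: "M ^ (m - 1) \<le> (M + 1) ^ d" .
  have "real m * M ^ (m - 1) \<le> (real d + 1) * (M + 1) ^ d"
    using m p M by (intro mult_mono) auto
  then show ?thesis using dl by (simp add: mult.assoc mult.left_commute mult_left_mono)
qed

theorem mainTheorem15:
  fixes d :: nat and \<epsilon> M :: real
  assumes "\<epsilon> > 0" and "M > 0"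
  shows "\<exists>\<delta>>0. \<forall>(u :: real mat) (us :: nat \<Rightarrow> real mat).
     u \<in> unitri d \<longrightarrow> (\<forall>n\<ge>1. us n \<in> unitri d) \<longrightarrow>
     bounded_mats ({u} \<union> {us n | n. n \<ge> 1}) \<longrightarrow>
     (\<forall>i. Suc i < d \<longrightarrow> \<bar>u $$ (i, Suc i)\<bar> \<le> M) \<longrightarrow>
     (\<forall>n\<ge>1. \<forall>i. Suc i < d \<longrightarrow> \<bar>us n $$ (i, Suc i)\<bar> \<le> M) \<longrightarrow>
     (\<forall>n\<ge>1. \<forall>i. Suc i < d \<longrightarrow> \<bar>us n $$ (i, Suc i) - u $$ (i, Suc i)\<bar> \<le> \<delta>) \<longrightarrow>
     (\<forall>i<d. \<forall>j<d.
        limsup (\<lambda>n. ereal \<bar>theta (1 / real n) (seq_prod d us n) $$ (i, j)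
                          - theta (1 / real n) (u ^\<^sub>m n) $$ (i, j)\<bar>) < ereal \<epsilon>)"
proof -
  note e = assms(1) and M = assms(2)
  define K where "K = (real d + 1) * (M + 1) ^ d"
  have K: "K > 0" unfolding K_def using M by simp
  define \<delta> where "\<delta> = \<epsilon> / (2 * K)"
  have dl: "\<delta> > 0" unfolding \<delta>_def using e K by simp
  have dK: "\<delta> * K = \<epsilon> / 2" unfolding \<delta>_def using K by simp
  show ?thesis
  proof (rule exI[of _ \<delta>], intro conjI dl allI impI)
    fix u :: "real mat" and us :: "nat \<Rightarrow> real mat"
    assume u: "u \<in> unitri d" and us: "\<forall>n\<ge>1. us n \<in> unitri d"
      and bd: "bounded_mats ({u} \<union> {us n | n. n \<ge> 1})"
      and uM: "\<forall>i. Suc i < d \<longrightarrow> \<bar>u $$ (i, Suc i)\<bar> \<le> M"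
      and usM: "\<forall>n\<ge>1. \<forall>i. Suc i < d \<longrightarrow> \<bar>us n $$ (i, Suc i)\<bar> \<le> M"
      and usd: "\<forall>n\<ge>1. \<forall>i. Suc i < d \<longrightarrow> \<bar>us n $$ (i, Suc i) - u $$ (i, Suc i)\<bar> \<le> \<delta>"
    fix i j assume i: "i < d" and j: "j < d"
    obtain B0 where B0: "\<forall>A\<in>{u} \<union> {us n | n. n \<ge> 1}. \<forall>i<dim_row A. \<forall>j<dim_col A. \<bar>A $$ (i, j)\<bar> \<le> B0"
      using bd unfolding bounded_mats_def by (elim exE) (rule that)
    define B where "B = \<bar>B0\<bar>"
    have B: "B \<ge> 0" unfolding B_def by simp
    have usS: "us (Suc n) \<in> unitri d" for n using us by simp
    have cu: "u \<in> carrier_mat d d" using unitriD(1)[OF u] .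
    have cus: "us (Suc n) \<in> carrier_mat d d" for n using unitriD(1)[OF usS] .
    have uB: "\<bar>u $$ (k, l)\<bar> \<le> B" if "k < d" "l < d" for k l
    proof -
      have "u \<in> {u} \<union> {us n | n. n \<ge> 1}" by simp
      with B0 have "\<forall>i<dim_row u. \<forall>j<dim_col u. \<bar>u $$ (i, j)\<bar> \<le> B0" by (rule bspec)
      then have "\<bar>u $$ (k, l)\<bar> \<le> B0" using that cu by simp
      then show ?thesis unfolding B_def by linarith
    qed
    have usB: "\<bar>us (Suc n) $$ (k, l)\<bar> \<le> B" if "k < d" "l < d" for n k l
    proof -
      have "us (Suc n) \<in> {us n | n. n \<ge> 1}" by (rule CollectI, rule exI[of _ "Suc n"]) simp
      then have "us (Suc n) \<in> {u} \<union> {us n | n. n \<ge> 1}" by (rule UnI2)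
      with B0 have "\<forall>i<dim_row (us (Suc n)). \<forall>j<dim_col (us (Suc n)). \<bar>us (Suc n) $$ (i, j)\<bar> \<le> B0" by (rule bspec)
      then have "\<bar>us (Suc n) $$ (k, l)\<bar> \<le> B0" using that cus[of n] by simp
      then show ?thesis unfolding B_def by linarith
    qed
    define x where "x n i j = seq_prod d us n $$ (i,j)" for n i j
    define y where "y n i j = (u ^\<^sub>m n) $$ (i,j)" for n i j
    define v where "v n k l = us n $$ (k,l)" for n k l
    define w where "w (n::nat) k l = u $$ (k,l)" for n k l
    have Xu: "seq_prod d us n \<in> unitri d" for n by (rule seq_prod_unitri[OF us])
    have Yu: "u ^\<^sub>m n \<in> unitri d" for n using pow_unitri[OF u] by (rule conjunct1)
    have x0: "\<And>i j. i < j \<Longrightarrow> j < d \<Longrightarrow> x 0 i j = 0" unfolding x_def by (simp add: seq_prod_0)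
    have y0: "\<And>i j. i < j \<Longrightarrow> j < d \<Longrightarrow> y 0 i j = 0" unfolding y_def using cu by simp
    have xdiag: "\<And>n i. i < d \<Longrightarrow> x n i i = 1" unfolding x_def by (rule unitriD(3)[OF Xu])
    have ydiag: "\<And>n i. i < d \<Longrightarrow> y n i i = 1" unfolding y_def by (rule unitriD(3)[OF Yu])
    have xrec: "\<And>n i j. i \<le> j \<Longrightarrow> j < d \<Longrightarrow>
        x (Suc n) i j = x n i j + (\<Sum>k\<in>{i..<j}. x n i k * v (Suc n) k j)"
      unfolding x_def v_def seq_prod_Suc by (rule mult_entry[OF Xu usS])
    have yrec: "\<And>n i j. i \<le> j \<Longrightarrow> j < d \<Longrightarrow>
        y (Suc n) i j = y n i j + (\<Sum>k\<in>{i..<j}. y n i k * w (Suc n) k j)"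
      unfolding y_def w_def pow_mat.simps by (rule mult_entry[OF Yu u])
    have vB: "\<And>n k j. k < d \<Longrightarrow> j < d \<Longrightarrow> \<bar>v (Suc n) k j\<bar> \<le> B" unfolding v_def by (rule usB)
    have wB: "\<And>n k j. k < d \<Longrightarrow> j < d \<Longrightarrow> \<bar>w (Suc n) k j\<bar> \<le> B" unfolding w_def by (rule uB)
    have vM: "\<And>n k. Suc k < d \<Longrightarrow> \<bar>v (Suc n) k (Suc k)\<bar> \<le> M" unfolding v_def using usM by simp
    have wM: "\<And>n k. Suc k < d \<Longrightarrow> \<bar>w (Suc n) k (Suc k)\<bar> \<le> M" unfolding w_def using uM by simp
    have vw: "\<And>n k. Suc k < d \<Longrightarrow> \<bar>v (Suc n) k (Suc k) - w (Suc n) k (Suc k)\<bar> \<le> \<delta>"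
      unfolding v_def w_def using usd by simp
    have cX: "seq_prod d us n \<in> carrier_mat d d" for n using unitriD(1)[OF Xu] .
    have cY: "u ^\<^sub>m n \<in> carrier_mat d d" for n using unitriD(1)[OF Yu] .
    show "limsup (\<lambda>n. ereal \<bar>theta (1 / real n) (seq_prod d us n) $$ (i, j)
                          - theta (1 / real n) (u ^\<^sub>m n) $$ (i, j)\<bar>) < ereal \<epsilon>"
    proof (cases "i \<le> j")
      case False
      have "(\<lambda>n. ereal \<bar>theta (1 / real n) (seq_prod d us n) $$ (i, j)
                          - theta (1 / real n) (u ^\<^sub>m n) $$ (i, j)\<bar>) = (\<lambda>n. ereal 0)"
        using False i j unitriD(2)[OF Xu] unitriD(2)[OF Yu]
        by (simp add: theta_entry[OF cX] theta_entry[OF cY])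
      then show ?thesis using e by (simp add: Limsup_const)
    next
      case True
      define m where "m = j - i"
      have jm: "j = i + m" using True unfolding m_def by simp
      have "\<exists>F\<ge>0. (m \<le> 1 \<longrightarrow> F = 0) \<and>
         (\<forall>n i. i + m < d \<longrightarrow> \<bar>x n i (i+m) - y n i (i+m)\<bar> \<le> real m * \<delta> * M ^ (m - 1) * real n ^ m + F * real n ^ (m - 1))"
        by (rule diffbound[OF B _ _ vB wB vM wM vw x0 xdiag xrec y0 ydiag yrec]) (use M dl in auto)
      then obtain F where FF: "F \<ge> 0 \<and> (m \<le> 1 \<longrightarrow> F = 0) \<and>
         (\<forall>n i. i + m < d \<longrightarrow> \<bar>x n i (i+m) - y n i (i+m)\<bar> \<le> real m * \<delta> * M ^ (m - 1) * real n ^ m + F * real n ^ (m - 1))"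
        by (elim exE) (rule that)
      have fn: "(\<lambda>n. ereal \<bar>theta (1 / real n) (seq_prod d us n) $$ (i, j)
                          - theta (1 / real n) (u ^\<^sub>m n) $$ (i, j)\<bar>) =
            (\<lambda>n. ereal \<bar>(1 / real n) ^ m * (x n i j - y n i j)\<bar>)"
        using True i j unfolding x_def y_def m_def
        by (simp add: theta_entry[OF cX] theta_entry[OF cY] right_diff_distrib)
      have c: "real m * \<delta> * M ^ (m - 1) \<le> \<epsilon> / 2"
        using cbound[OF M less_imp_le[OF dl], of m d] j dK unfolding m_def K_def by simp
      show ?thesis unfolding fn
        by (rule limsup_final[OF c e]) (use FF j jm in auto)
    qed
  qed
qed


end
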